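(* Let $X$ be a compact topological space, let $D\subseteq X$, let $\overline{D}$ be the closure of $D$ in $X$, and put $\partial D:=\overline{D}\setminus D$. Let $\overline{\mathbb{C}}=\mathbb{C}\cup\{\infty\}$ be the Riemann sphere and let $f\colon\overline{D}\to\overline{\mathbb{C}}$ be a continuous map such that $f(D)$ is open in $\overline{\mathbb{C}}$. Let $M:=\sup_{z\in\partial D}|f(z)|\in[0,\infty]$ (with $|\infty|=\infty$) and $\overline{B}_M:=\{w\in\overline{\mathbb{C}}\colon |w|\le M\}$. Then either $f(D)\supseteq\overline{\mathbb{C}}\setminus\overline{B}_M$ (i.e. $f$ takes on $D$ all values in $\overline{\mathbb{C}}$ of modulus $>M$), or $f(\overline{D})\subseteq\overline{B}_M$.
   Context: Note that $\partial D$ is defined as $\overline{D}\setminus D$; the convention $|\infty|=\infty$ is used. *)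

theory Defs
  imports "HOL-Analysis.Analysis" "HOL-Library.Extended_Nonnegative_Real"
begin

text \<open>The Riemann sphere as the one-point compactification of the complex plane:
  \<open>Some z\<close> is the point z, \<open>None\<close> is the point at infinity.\<close>

type_synonym csphere = "complex option"

definition sphere_open :: "csphere set \<Rightarrow> bool" where
  "sphere_open U \<longleftrightarrow> open {z. Some z \<in> U} \<and>
     (None \<in> U \<longrightarrow> compact (- {z. Some z \<in> U}))"

lemma istopology_sphere_open: "istopology sphere_open"
  unfolding istopology_def
proof (intro conjI allI impI ballI)
  fix S T assume S: "sphere_open S" and T: "sphere_open T"
  have e: "{z. Some z \<in> S \<inter> T} = {z. Some z \<in> S} \<inter> {z. Some z \<in> T}" by auto
  have c: "- {z. Some z \<in> S \<inter> T} = - {z. Some z \<in> S} \<union> - {z. Some z \<in> T}" by auto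
  show "sphere_open (S \<inter> T)"
    using S T unfolding sphere_open_def e c by (auto intro: compact_Un)
next
  fix K assume K: "\<forall>S\<in>K. sphere_open S"
  have e: "{z. Some z \<in> \<Union>K} = (\<Union>S\<in>K. {z. Some z \<in> S})" by auto
  have o: "open {z. Some z \<in> \<Union>K}" unfolding e using K by (auto simp: sphere_open_def)
  show "sphere_open (\<Union>K)"
    unfolding sphere_open_def
  proof (intro conjI impI o)
    assume "None \<in> \<Union>K"
    then obtain S where S: "S \<in> K" "None \<in> S" by auto
    then have cS: "compact (- {z. Some z \<in> S})" using K by (auto simp: sphere_open_def)
    have "- {z. Some z \<in> \<Union>K} = (- {z. Some z \<in> S}) \<inter> - {z. Some z \<in> \<Union>K}"
      using S by auto
    moreover have "closed (- {z. Some z \<in> \<Union>K})" using o by (simp add: closed_def)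
    ultimately show "compact (- {z. Some z \<in> \<Union>K})"
      using cS by (metis compact_Int_closed)
  qed
qed

definition riemann_sphere :: "csphere topology" where
  "riemann_sphere = topology sphere_open"

lemma openin_riemann_sphere: "openin riemann_sphere U \<longleftrightarrow> sphere_open U"
  unfolding riemann_sphere_def using istopology_sphere_open by simp

definition smod :: "csphere \<Rightarrow> ennreal" where
  "smod w = (case w of None \<Rightarrow> \<infinity> | Some z \<Rightarrow> ennreal (cmod z))"

end

theory Submission
  imports Defs
begin

lemma topspace_rs: "topspace riemann_sphere = UNIV"
proof -
  have "openin riemann_sphere UNIV" unfolding openin_riemann_sphere sphere_open_def by auto
  then show ?thesis using openin_subset by blast
qed

lemma rs_open_Some: "open B \<Longrightarrow> openin riemann_sphere (Some ` B)"
  unfolding openin_riemann_sphere sphere_open_def by (auto simp: image_iff)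

lemma Hausdorff_rs: "Hausdorff_space riemann_sphere"
  unfolding Hausdorff_space_def
proof (intro allI impI)
  fix x y :: csphere assume "x \<in> topspace riemann_sphere \<and> y \<in> topspace riemann_sphere \<and> x \<noteq> y"
  then have "x \<noteq> y" by simp
  have side: "\<exists>U V. openin riemann_sphere U \<and> openin riemann_sphere V \<and> Some a \<in> U \<and> None \<in> V \<and> disjnt U V" for a
  proof (intro exI conjI)
    show "openin riemann_sphere (Some ` ball a 1)" by (rule rs_open_Some) auto
    have e: "{z. Some z \<in> insert None (Some ` (- cball a 1))} = - cball a 1" by auto
    show "openin riemann_sphere (insert None (Some ` (- cball a 1)))"
      unfolding openin_riemann_sphere sphere_open_def e by auto
  qed (auto simp: disjnt_def)
  show "\<exists>U V. openin riemann_sphere U \<and> openin riemann_sphere V \<and> x \<in> U \<and> y \<in> V \<and> disjnt U V"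
  proof (cases x)
    case None
    show ?thesis
    proof (cases y)
      case None then show ?thesis using \<open>x \<noteq> y\<close> \<open>x = None\<close> by simp
    next
      case (Some b)
      then obtain U V where "openin riemann_sphere U" "openin riemann_sphere V" "Some b \<in> U" "None \<in> V" "disjnt U V"
        using side by blast
      then show ?thesis using None Some by (metis disjnt_sym)
    qed
  next
    case (Some a)
    show ?thesis
    proof (cases y)
      case None then show ?thesis using side Some by blast
    next
      case (Some b)
      with \<open>x = Some a\<close> \<open>x \<noteq> y\<close> have "a \<noteq> b" by simp
      define r where "r = dist a b / 2"
      have r: "r > 0" using \<open>a \<noteq> b\<close> by (simp add: r_def)
      have d: "disjnt (ball a r) (ball b r)"
        unfolding disjnt_def r_def by (rule disjoint_ballI) simp
      show ?thesis
      proof (intro exI conjI)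
        show "openin riemann_sphere (Some ` ball a r)" "openin riemann_sphere (Some ` ball b r)"
          by (auto intro: rs_open_Some)
        show "x \<in> Some ` ball a r" "y \<in> Some ` ball b r" using r \<open>x = Some a\<close> Some by auto
        show "disjnt (Some ` ball a r) (Some ` ball b r)" using d by (auto simp: disjnt_def)
      qed
    qed
  qed
qed

theorem mainTheorem7:
  fixes X :: "'a topology" and D :: "'a set" and f :: "'a \<Rightarrow> csphere"
    and M :: ennreal
  assumes "compact_space X"
    and "D \<subseteq> topspace X"
    and "continuous_map (subtopology X (X closure_of D)) riemann_sphere f"
    and "openin riemann_sphere (f ` D)"
    and "M = (SUP z \<in> (X closure_of D) - D. smod (f z))"
  shows "UNIV - {w. smod w \<le> M} \<subseteq> f ` D \<or> f ` (X closure_of D) \<subseteq> {w. smod w \<le> M}"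
proof (cases "M = \<infinity>")
  case True then show ?thesis by auto
next
  case False
  then obtain m where m: "M = ennreal m" "m \<ge> 0" by (cases M) auto
  define K where "K = X closure_of D"
  have DK: "D \<subseteq> K" unfolding K_def using assms(2) closure_of_subset by blast
  have bd: "x \<in> K \<Longrightarrow> x \<notin> D \<Longrightarrow> smod (f x) \<le> M" for x
    unfolding assms(5) K_def by (rule SUP_upper) auto
  have "compactin X K" unfolding K_def
    using closedin_compact_space[OF assms(1)] closedin_closure_of by blast
  then have "compactin (subtopology X K) K" by (simp add: compactin_subtopology)
  then have "compactin riemann_sphere (f ` K)"
    using image_compactin assms(3) unfolding K_def by blast
  then have "closedin riemann_sphere (f ` K)" using Hausdorff_rs compactin_imp_closedin by blast
  then have "sphere_open (- (f ` K))"
    by (simp add: closedin_def topspace_rs openin_riemann_sphere Compl_eq_Diff_UNIV)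
  moreover have e1: "{z. Some z \<in> - (f ` K)} = - {z. Some z \<in> f ` K}" by auto
  ultimately have oK: "open (- {z. Some z \<in> f ` K})" and cK0: "None \<notin> f ` K \<Longrightarrow> compact (- (- {z. Some z \<in> f ` K}))"
    unfolding sphere_open_def by (simp_all only: e1) auto
  have cK: "None \<notin> f ` K \<Longrightarrow> compact {z. Some z \<in> f ` K}" using cK0 by simp
  have Cc: "closed {z. Some z \<in> f ` K}" using oK by (simp add: closed_def)
  have sD: "sphere_open (f ` D)" using assms(4) openin_riemann_sphere by blast
  have oD: "open {z. Some z \<in> f ` D}" and cD: "None \<in> f ` D \<Longrightarrow> compact (- {z. Some z \<in> f ` D})"
    using sD unfolding sphere_open_def by auto
  define U where "U = - cball (0::complex) m"
  have smodS: "smod (Some z) = ennreal (cmod z)" for z by (simp add: smod_def)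
  have bigM: "z \<in> U \<longleftrightarrow> \<not> smod (Some z) \<le> M" for z
    using m by (simp add: U_def smodS ennreal_le_iff)
  have conU: "connected U" unfolding U_def
    by (rule connected_complement_bounded_convex) auto
  define P where "P = U \<inter> {z. Some z \<in> f ` D}"
  have P2: "P = U \<inter> {z. Some z \<in> f ` K}"
  proof -
    have "z \<in> U \<Longrightarrow> Some z \<in> f ` K \<Longrightarrow> Some z \<in> f ` D" for z
    proof -
      assume "z \<in> U" "Some z \<in> f ` K"
      then obtain x where x: "x \<in> K" "Some z = f x" by auto
      show ?thesis
      proof (cases "x \<in> D")
        case True then show ?thesis using x by auto
      next
        case False then show ?thesis using bd[OF x(1)] x(2) bigM \<open>z \<in> U\<close> by auto
      qed
    qed
    then show ?thesis unfolding P_def using DK by auto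
  qed
  have "openin (top_of_set U) P" unfolding P_def using oD by (simp add: openin_open_Int)
  moreover have "closedin (top_of_set U) P" unfolding P2 using Cc by (simp add: closedin_closed_Int)
  ultimately have "P = {} \<or> P = U" using conU connected_clopen by blast
  then show ?thesis
  proof
    assume P0: "P = {}"
    have "None \<notin> f ` D"
    proof
      assume "None \<in> f ` D"
      then have "bounded (- {z. Some z \<in> f ` D})" using cD compact_imp_bounded by blast
      then obtain B where B: "\<And>z. z \<in> - {z. Some z \<in> f ` D} \<Longrightarrow> norm z \<le> B" by (auto simp: bounded_iff)
      define z where "z = complex_of_real (\<bar>B\<bar> + m + 1)"
      have nz: "norm z = \<bar>B\<bar> + m + 1" unfolding z_def norm_of_real using m(2) by simp
      have "z \<in> U" using nz m(2) by (simp add: U_def)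
      moreover have "Some z \<in> f ` D"
      proof (rule ccontr)
        assume "Some z \<notin> f ` D" then have "norm z \<le> B" using B by simp
        then show False using nz m(2) by linarith
      qed
      ultimately show False using P0 unfolding P_def by auto
    qed
    have "f ` K \<subseteq> {w. smod w \<le> M}"
    proof
      fix w assume "w \<in> f ` K"
      then obtain x where x: "x \<in> K" "w = f x" by auto
      show "w \<in> {w. smod w \<le> M}"
      proof (cases "x \<in> D")
        case False then show ?thesis using bd x by auto
      next
        case True
        then have wD: "w \<in> f ` D" using x by auto
        show ?thesis
        proof (cases w)
          case None then show ?thesis using wD \<open>None \<notin> f ` D\<close> by auto
        next
          case (Some z) then show ?thesis using wD P0 bigM unfolding P_def by auto
        qed
      qed
    qed
    then show ?thesis unfolding K_def by blast
  next
    assume PU: "P = U"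
    have "None \<in> f ` K"
    proof (rule ccontr)
      assume "None \<notin> f ` K"
      then have "bounded {z. Some z \<in> f ` K}" using cK compact_imp_bounded by blast
      then obtain B where B: "\<And>z. Some z \<in> f ` K \<Longrightarrow> norm z \<le> B" by (auto simp: bounded_iff)
      define z where "z = complex_of_real (\<bar>B\<bar> + m + 1)"
      have nz: "norm z = \<bar>B\<bar> + m + 1" unfolding z_def norm_of_real using m(2) by simp
      have "z \<in> U" using nz m(2) by (simp add: U_def)
      then have "Some z \<in> f ` K" using PU unfolding P2 by auto
      then show False using B[of "z"] nz m(2) by linarith
    qed
    then obtain x where x: "x \<in> K" "None = f x" by auto
    have "x \<in> D"
    proof (rule ccontr)
      assume "x \<notin> D" then have "smod None \<le> M" using bd[OF x(1)] x(2) by simp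
      then show False using False by (simp add: smod_def top_unique)
    qed
    then have ND: "None \<in> f ` D" using x by auto
    have "UNIV - {w. smod w \<le> M} \<subseteq> f ` D"
    proof
      fix w assume w: "w \<in> UNIV - {w. smod w \<le> M}"
      show "w \<in> f ` D"
      proof (cases w)
        case None then show ?thesis using ND by simp
      next
        case (Some z) then have "z \<in> U" using w bigM by auto
        then show ?thesis using PU Some unfolding P_def by auto
      qed
    qed
    then show ?thesis by blast
  qed
qed

end
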